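(* Let $t>0$ and $\lambda = \frac{1}{1-e^{-2t}}$ (so that $\lambda(1-e^{-2t}) = 1$). Then for every $M>0$ there exists a bounded, measurable, $-\lambda$-log-concave function $f:\mathbb{R}\to(0,\infty)$ with $\int f\,d\gamma = 1$ such that $f_t$ is not $-M$-log-concave; in fact one can take $f$ so that $f_t$ is $C^2$ and $(\log f_t)''(0) \ge M$.
   Context: $\gamma$ is the standard Gaussian measure on $\mathbb{R}$. For $t \ge 0$ and $f \in L^1(\gamma)$, the Ornstein–Uhlenbeck semigroup is $(P_t f)(x) = \mathbb{E}\, f(e^{-t}x + \sqrt{1-e^{-2t}}\,Z)$, where $Z$ is a standard Gaussian random variable; write $f_t = P_t f$. For $\lambda\in\mathbb{R}$, a function $g:\mathbb{R}\to(0,\infty)$ is called $-\lambda$-log-concave if $x\mapsto \log g(x) - \lambda x^2/2$ is concave. *)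

theory Defs
  imports "HOL-Probability.Probability"
begin

definition gauss :: "real measure" where
  "gauss = density lborel std_normal_density"

definition OU :: "real \<Rightarrow> (real \<Rightarrow> real) \<Rightarrow> real \<Rightarrow> real" where
  "OU t f x = (\<integral>z. f (exp (- t) * x + sqrt (1 - exp (- 2 * t)) * z) \<partial>gauss)"

definition neg_log_concave :: "real \<Rightarrow> (real \<Rightarrow> real) \<Rightarrow> bool" where
  "neg_log_concave lam g \<longleftrightarrow> (\<forall>x. 0 < g x) \<and> concave_on UNIV (\<lambda>x. ln (g x) - lam * x\<^sup>2 / 2)"

definition C2 :: "(real \<Rightarrow> real) \<Rightarrow> bool" where
  "C2 g \<longleftrightarrow> (\<forall>x. g differentiable at x) \<and> (\<forall>x. deriv g differentiable at x)
     \<and> continuous_on UNIV (deriv (deriv g))"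

end

theory Submission
  imports Defs
begin

lemma cont_slice:
  fixes \<phi> :: "real \<Rightarrow> real \<Rightarrow> real"
  assumes c1: "continuous_on UNIV (\<lambda>(x,c). \<phi> x c)"
  shows "continuous_on S (\<phi> x)"
proof -
  have "continuous_on UNIV ((\<lambda>(x,c). \<phi> x c) \<circ> (\<lambda>c. (x,c)))"
    by (rule continuous_on_compose) (auto intro!: continuous_intros intro: continuous_on_subset[OF c1])
  then show ?thesis by (auto simp: o_def intro: continuous_on_subset)
qed

lemma leib:
  fixes \<phi> \<phi>' :: "real \<Rightarrow> real \<Rightarrow> real"
  assumes d: "\<And>x c. ((\<lambda>x. \<phi> x c) has_real_derivative \<phi>' x c) (at x)"
    and c1: "continuous_on UNIV (\<lambda>(x,c). \<phi> x c)"
    and c2: "continuous_on UNIV (\<lambda>(x,c). \<phi>' x c)"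
  shows "((\<lambda>x. integral {a..b} (\<phi> x)) has_real_derivative integral {a..b} (\<phi>' x0)) (at x0)"
proof -
  have ci: "continuous_on {a..b} (\<phi> x)" for x
    by (rule cont_slice[OF c1])
  have "((\<lambda>x. integral (cbox a b) (\<phi> x)) has_field_derivative integral (cbox a b) (\<phi>' x0)) (at x0 within UNIV)"
    apply (rule leibniz_rule_field_derivative)
    using d ci c2 by (auto intro: integrable_continuous_interval continuous_on_subset)
  then show ?thesis by simp
qed

lemma ftc_real:
  fixes f f' :: "real \<Rightarrow> real"
  assumes "a \<le> b" "\<And>x. (f has_real_derivative f' x) (at x)"
  shows "(f' has_integral (f b - f a)) {a..b}"
  apply (rule fundamental_theorem_of_calculus[OF assms(1)])
  using assms(2) by (auto simp: has_real_derivative_iff_has_vector_derivative intro: has_vector_derivative_at_within)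

definition Fg :: "real \<Rightarrow> real \<Rightarrow> real \<Rightarrow> real" where
  "Fg lam R y = integral {-R..R} (\<lambda>c. exp (-lam*(y-c)^2))"

definition dFg :: "real \<Rightarrow> real \<Rightarrow> real \<Rightarrow> real" where
  "dFg lam R y = exp (-lam*(y+R)^2) - exp (-lam*(y-R)^2)"

definition ddFg :: "real \<Rightarrow> real \<Rightarrow> real \<Rightarrow> real" where
  "ddFg lam R y = -2*lam*(y+R)*exp (-lam*(y+R)^2) + 2*lam*(y-R)*exp (-lam*(y-R)^2)"

lemma Fg_deriv:
  assumes "R \<ge> 0"
  shows "(Fg lam R has_real_derivative dFg lam R y) (at y)"
proof -
  have 1: "((\<lambda>y. Fg lam R y) has_real_derivative
      integral {-R..R} (\<lambda>c. exp (-lam*(y-c)^2) * (-lam*(2*(y-c)))) ) (at y)"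
    unfolding Fg_def
    by (rule leib[where \<phi>="\<lambda>y c. exp (-lam*(y-c)^2)"])
       (auto intro!: derivative_eq_intros continuous_intros simp: split_beta)
  have 2: "((\<lambda>c. exp (-lam*(y-c)^2) * (-lam*(2*(y-c)*(-1)))) has_integral (exp (-lam*(y-R)^2) - exp (-lam*(y - (-R))^2))) {-R..R}"
    by (rule ftc_real[where f="\<lambda>c. exp (-lam*(y-c)^2)"]) (use assms in \<open>auto intro!: derivative_eq_intros\<close>)
  have 3: "((\<lambda>c. exp (-lam*(y-c)^2) * (-lam*(2*(y-c)))) has_integral dFg lam R y) {-R..R}"
    using has_integral_neg[OF 2] unfolding dFg_def by (simp add: algebra_simps)
  show ?thesis using 1 3 integral_unique by metis
qed

lemma dFg_deriv: "(dFg lam R has_real_derivative ddFg lam R y) (at y)"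
  unfolding dFg_def ddFg_def
  by (auto intro!: derivative_eq_intros simp: algebra_simps)

lemma Fg_m1:
  fixes lam R y :: real
  assumes "R \<ge> 0" "lam > 0"
  shows "((\<lambda>c. (y-c) * exp (-lam*(y-c)^2)) has_integral (exp (-lam*(y-R)^2) - exp (-lam*(y+R)^2))/(2*lam)) {-R..R}"
proof -
  have "((\<lambda>c. exp (-lam*(y-c)^2) * (-lam*(2*(y-c)*(-1))) / (2*lam)) has_integral
        (exp (-lam*(y-R)^2)/(2*lam) - exp (-lam*(y - (-R))^2)/(2*lam))) {-R..R}"
    by (rule ftc_real[where f="\<lambda>c. exp (-lam*(y-c)^2)/(2*lam)"]) (use assms in \<open>auto intro!: derivative_eq_intros\<close>)
  moreover have "(\<lambda>c. exp (-lam*(y-c)^2) * (-lam*(2*(y-c)*(-1))) / (2*lam)) = (\<lambda>c. (y-c) * exp (-lam*(y-c)^2))"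
    using assms by (auto simp: field_simps)
  moreover have "exp (-lam*(y-R)^2)/(2*lam) - exp (-lam*(y - (-R))^2)/(2*lam) = (exp (-lam*(y-R)^2) - exp (-lam*(y+R)^2))/(2*lam)"
    by (simp add: diff_divide_distrib)
  ultimately show ?thesis by simp
qed

lemma cont_int:
  fixes f :: "real \<Rightarrow> real"
  assumes "continuous_on UNIV f" shows "f integrable_on {a..b}"
  by (rule integrable_continuous_interval) (rule continuous_on_subset[OF assms], simp)

lemma Fg_int: fixes lam R y :: real shows "(\<lambda>c. exp (-lam*(y-c)^2)) integrable_on {-R..R}"
  by (intro cont_int continuous_intros)

lemma Fg_pos:
  fixes lam R y :: real
  assumes "R > 0" "lam \<ge> 0"
  shows "Fg lam R y > 0"
proof -
  let ?m = "exp (-lam*(\<bar>y\<bar>+R)^2)"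
  have "integral {-R..R} (\<lambda>c. ?m) \<le> Fg lam R y"
    unfolding Fg_def
  proof (rule integral_le)
    show "(\<lambda>c. ?m) integrable_on {-R..R}" by (intro cont_int continuous_intros)
    show "(\<lambda>c. exp (-lam*(y-c)^2)) integrable_on {-R..R}" by (rule Fg_int)
    show "?m \<le> exp (-lam*(y-c)^2)" if c: "c \<in> {-R..R}" for c
    proof -
      have "(y-c)^2 \<le> (\<bar>y\<bar>+R)^2"
        using c by (intro power2_le_iff_abs_le[THEN iffD2]) (auto simp: abs_if)
      then show "?m \<le> exp (-lam*(y-c)^2)" using assms by (auto intro: mult_left_mono)
    qed
  qed
  moreover have "integral {-R..R} (\<lambda>c. ?m) = 2*R*?m" using assms by (simp add: content_real)
  moreover have "2*R*?m > 0" using assms by simp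
  ultimately show ?thesis by linarith
qed

lemma Fg_ineq:
  fixes lam R y :: real
  assumes "R > 0" "lam > 0"
  shows "ddFg lam R y * Fg lam R y \<le> (dFg lam R y)^2"
proof -
  define g where "g = (\<lambda>c. exp (-lam*(y-c)^2))"
  define Z where "Z = Fg lam R y"
  define gA where "gA = exp (-lam*(y-R)^2)"
  define gB where "gB = exp (-lam*(y+R)^2)"
  define m1 where "m1 = integral {-R..R} (\<lambda>c. (y-c) * g c)"
  have gi: "g integrable_on {-R..R}" unfolding g_def by (rule Fg_int)
  have m1i: "(\<lambda>c. (y-c) * g c) integrable_on {-R..R}" unfolding g_def by (intro cont_int continuous_intros)
  have m1v: "m1 = (gA - gB)/(2*lam)"
    unfolding m1_def g_def gA_def gB_def using Fg_m1[OF _ assms(2), of R y] assms(1) integral_unique by simp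
  have "integral {-R..R} (\<lambda>c. (y-R) * g c) \<le> m1"
    unfolding m1_def
    by (rule integral_le) (use gi m1i in \<open>auto simp: g_def intro!: mult_right_mono cont_int continuous_intros\<close>)
  then have h1: "(y-R)*Z \<le> m1" unfolding Z_def Fg_def g_def by simp
  have "m1 \<le> integral {-R..R} (\<lambda>c. (y+R) * g c)"
    unfolding m1_def
    by (rule integral_le) (use gi m1i in \<open>auto simp: g_def intro!: mult_right_mono cont_int continuous_intros\<close>)
  then have h2: "m1 \<le> (y+R)*Z" unfolding Z_def Fg_def g_def by simp
  have p1: "((y-R)*Z - m1)*gA \<le> 0" using h1 by (intro mult_nonpos_nonneg) (auto simp: gA_def)
  have p2: "((y+R)*Z - m1)*gB \<ge> 0" using h2 by (intro mult_nonneg_nonneg) (auto simp: gB_def)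
  have "Z*((y-R)*gA - (y+R)*gB) \<le> m1*(gA-gB)" using p1 p2 by (simp add: algebra_simps)
  then have "2*lam*(Z*((y-R)*gA - (y+R)*gB)) \<le> 2*lam*(m1*(gA-gB))"
    using assms by (intro mult_left_mono) auto
  also have "\<dots> = (2*lam*m1)*(gA-gB)" by (simp add: algebra_simps)
  also have "2*lam*m1 = gA - gB" using m1v assms by simp
  also have "(gA - gB)*(gA-gB) = (gA - gB)^2" by (simp add: power2_eq_square)
  finally show ?thesis unfolding ddFg_def dFg_def Z_def[symmetric] gA_def[symmetric] gB_def[symmetric]
    by (simp add: algebra_simps power2_eq_square)
qed

lemma lnFg_concave:
  fixes lam R :: real
  assumes "R > 0" "lam > 0"
  shows "concave_on UNIV (\<lambda>y. ln (Fg lam R y))"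
proof -
  have Fp: "\<And>y. Fg lam R y > 0" using Fg_pos assms by auto
  have d1: "((\<lambda>y. dFg lam R y / Fg lam R y) has_real_derivative
     (ddFg lam R y * Fg lam R y - dFg lam R y * dFg lam R y) / (Fg lam R y)^2) (at y)" for y
    using Fp[of y] Fg_deriv[of R lam y] dFg_deriv[of lam R y] assms
    by (auto intro!: derivative_eq_intros simp: power2_eq_square)
  have mono: "dFg lam R y / Fg lam R y \<le> dFg lam R x / Fg lam R x" if "x \<le> y" for x y
  proof (rule DERIV_nonpos_imp_decreasing_open[OF that])
    show "\<exists>d. ((\<lambda>y. dFg lam R y / Fg lam R y) has_real_derivative d) (at z) \<and> d \<le> 0" for z
      using d1[of z] Fg_ineq[OF assms, of z] by (auto intro!: divide_nonpos_nonneg simp: power2_eq_square)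
    show "continuous_on {x..y} (\<lambda>y. dFg lam R y / Fg lam R y)"
      using d1 by (meson DERIV_continuous continuous_at_imp_continuous_on)
  qed
  have "convex_on UNIV (\<lambda>y. - ln (Fg lam R y))"
  proof (rule convex_on_realI[where f'="\<lambda>y. - (dFg lam R y / Fg lam R y)"])
    show "((\<lambda>y. - ln (Fg lam R y)) has_real_derivative - (dFg lam R y / Fg lam R y)) (at y)" for y
      using Fp[of y] Fg_deriv[of R lam y] assms
      by (auto intro!: derivative_eq_intros simp: field_simps)
  qed (use mono in auto)
  then show ?thesis by (simp add: concave_on_def)
qed

definition Shn :: "real \<Rightarrow> real \<Rightarrow> nat \<Rightarrow> real \<Rightarrow> real" where
  "Shn k R j x = integral {-R..R} (\<lambda>c. (k*c)^j * exp (k*c*x))"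

lemma Shn_deriv: "(Shn k R j has_real_derivative Shn k R (Suc j) x) (at x)"
proof -
  have "((\<lambda>x. Shn k R j x) has_real_derivative integral {-R..R} (\<lambda>c. (k*c)^j * (exp (k*c*x) * (k*c)))) (at x)"
    unfolding Shn_def
    by (rule leib[where \<phi>="\<lambda>x c. (k*c)^j * exp (k*c*x)"])
       (auto intro!: derivative_eq_intros continuous_intros simp: split_beta)
  moreover have "(\<lambda>c. (k*c)^j * (exp (k*c*x) * (k*c))) = (\<lambda>c. (k*c)^(Suc j) * exp (k*c*x))"
    by (auto simp: algebra_simps)
  ultimately show ?thesis unfolding Shn_def by simp
qed

lemma Shn_cont: "continuous_on UNIV (Shn k R j)"
  using Shn_deriv by (meson DERIV_continuous continuous_at_imp_continuous_on)

lemma Shn0_pos: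
  fixes k R x :: real
  assumes "R > 0"
  shows "Shn k R 0 x > 0"
proof -
  let ?m = "exp (-(\<bar>k*x\<bar>*R))"
  have "integral {-R..R} (\<lambda>c. ?m) \<le> Shn k R 0 x"
    unfolding Shn_def
  proof (rule integral_le)
    show "(\<lambda>c. ?m) integrable_on {-R..R}" by (intro cont_int continuous_intros)
    show "(\<lambda>c. (k*c)^0 * exp (k*c*x)) integrable_on {-R..R}" by (intro cont_int continuous_intros)
    show "?m \<le> (k*c)^0 * exp (k*c*x)" if c: "c \<in> {-R..R}" for c
    proof -
      have "\<bar>k*x\<bar>*\<bar>c\<bar> \<le> \<bar>k*x\<bar>*R" using c by (intro mult_left_mono) auto
      moreover have "\<bar>k*c*x\<bar> = \<bar>k*x\<bar>*\<bar>c\<bar>" by (simp add: abs_mult mult_ac)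
      moreover have "-\<bar>k*c*x\<bar> \<le> k*c*x" by linarith
      ultimately have "-(\<bar>k*x\<bar>*R) \<le> k*c*x" by linarith
      then show ?thesis by simp
    qed
  qed
  moreover have "integral {-R..R} (\<lambda>c. ?m) = 2*R*?m" using assms by (simp add: content_real)
  moreover have "2*R*?m > 0" using assms by simp
  ultimately show ?thesis by linarith
qed

lemma Shn_at0:
  fixes k R :: real
  assumes "R > 0"
  shows "Shn k R 0 0 = 2*R" "Shn k R 1 0 = 0" "Shn k R 2 0 = 2*k^2*R^3/3"
proof -
  show "Shn k R 0 0 = 2*R" using assms by (simp add: Shn_def content_real)
  have "((\<lambda>c. k*c) has_integral (k*R^2/2 - k*(-R)^2/2)) {-R..R}"
    by (rule ftc_real[where f="\<lambda>c. k*c^2/2"]) (use assms in \<open>auto intro!: derivative_eq_intros\<close>)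
  from integral_unique[OF this] show "Shn k R 1 0 = 0" unfolding Shn_def by simp
  have "((\<lambda>c. k^2*c^2) has_integral (k^2*R^3/3 - k^2*(-R)^3/3)) {-R..R}"
    by (rule ftc_real[where f="\<lambda>c. k^2*c^3/3"]) (use assms in \<open>auto intro!: derivative_eq_intros simp: power2_eq_square power3_eq_cube\<close>)
  then have i2: "integral {-R..R} (\<lambda>c. k^2*c^2) = k^2*R^3/3 - k^2*(-R)^3/3" by (rule integral_unique)
  have e: "(\<lambda>c. (k*c)^2 * exp (k*c*0)) = (\<lambda>c. k^2*c^2)" by (simp add: power_mult_distrib)
  have "k^2*R^3/3 - k^2*(-R)^3/3 = 2*k^2*R^3/3" by (simp add: algebra_simps)
  then show "Shn k R 2 0 = 2*k^2*R^3/3" unfolding Shn_def e i2 .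
qed

lemma expo_eq:
  fixes a s x z c lam :: real
  assumes "s > 0" "lam = 1/s^2"
  shows "- (z^2)/2 + lam*(a*x+s*z)^2/2 + -lam*(a*x+s*z-c)^2
       = -(a^2/(4* s^2))*x^2 + (a/s^2)*c*x + -((z - (2*c-a*x)/(2* s))^2)"
  using assms(1) unfolding assms(2) by (simp add: field_simps power2_eq_square)

lemma gauss_pt:
  fixes a s x z c lam :: real
  assumes "s > 0" "lam = 1/s^2"
  shows "std_normal_density z * (exp (lam*(a*x+s*z)^2/2) * exp (-lam*(a*x+s*z-c)^2))
       = (1/sqrt 2 * exp (-(a^2/(4* s^2))*x^2 + (a/s^2)*c*x)) * normal_density ((2*c-a*x)/(2* s)) (1/sqrt 2) z"
proof -
  have sq: "sqrt (2 * pi * (1/sqrt 2)^2) = sqrt pi" by (simp add: power_divide)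
  have sq2: "sqrt (2*pi) = sqrt 2 * sqrt pi" by (simp add: real_sqrt_mult)
  have e: "(z - (2*c-a*x)/(2* s))^2 / (2*(1/sqrt 2)^2) = (z - (2*c-a*x)/(2* s))^2" by (simp add: power_divide)
  have "std_normal_density z * (exp (lam*(a*x+s*z)^2/2) * exp (-lam*(a*x+s*z-c)^2))
      = 1/sqrt (2*pi) * exp (- (z^2)/2 + lam*(a*x+s*z)^2/2 + -lam*(a*x+s*z-c)^2)"
    unfolding std_normal_density_def exp_add by (simp add: mult_ac)
  also have "\<dots> = 1/sqrt (2*pi) * exp (-(a^2/(4* s^2))*x^2 + (a/s^2)*c*x + -((z - (2*c-a*x)/(2* s))^2))"
    using expo_eq[OF assms] by simp
  also have "\<dots> = (1/sqrt 2 * exp (-(a^2/(4* s^2))*x^2 + (a/s^2)*c*x)) * (1/sqrt pi * exp (-((z - (2*c-a*x)/(2* s))^2)))"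
    unfolding exp_add sq2 by simp
  also have "\<dots> = (1/sqrt 2 * exp (-(a^2/(4* s^2))*x^2 + (a/s^2)*c*x)) * normal_density ((2*c-a*x)/(2* s)) (1/sqrt 2) z"
    unfolding normal_density_def sq by (simp add: power_divide)
  finally show ?thesis .
qed

lemma gauss_inner:
  fixes a s x c lam :: real
  assumes "s > 0" "lam = 1/s^2"
  shows "integrable lborel (\<lambda>z. std_normal_density z * (exp (lam*(a*x+s*z)^2/2) * exp (-lam*(a*x+s*z-c)^2)))"
    "(\<integral>z. std_normal_density z * (exp (lam*(a*x+s*z)^2/2) * exp (-lam*(a*x+s*z-c)^2)) \<partial>lborel)
       = 1/sqrt 2 * exp (-(a^2/(4* s^2))*x^2 + (a/s^2)*c*x)"
  unfolding gauss_pt[OF assms] by auto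

definition f0 :: "real \<Rightarrow> real \<Rightarrow> real \<Rightarrow> real" where
  "f0 lam R y = exp (lam*y^2/2) * Fg lam R y"

lemma f0_cont: "R \<ge> 0 \<Longrightarrow> continuous_on UNIV (f0 lam R)"
  unfolding f0_def
  by (intro continuous_intros continuous_at_imp_continuous_on ballI DERIV_continuous[OF Fg_deriv]) auto

lemma f0_meas: "R \<ge> 0 \<Longrightarrow> f0 lam R \<in> borel_measurable borel"
  by (rule borel_measurable_continuous_onI[OF f0_cont])

lemma f0_lint:
  fixes lam R y :: real
  shows "f0 lam R y = (\<integral>c. indicator {-R..R} c * (exp (lam*y^2/2) * exp (-lam*(y-c)^2)) \<partial>lborel)"
proof -
  have si: "set_integrable lborel {-R..R} (\<lambda>c. exp (lam*y^2/2) * exp (-lam*(y-c)^2))"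
    by (intro borel_integrable_atLeastAtMost' continuous_intros)
  have "f0 lam R y = integral {-R..R} (\<lambda>c. exp (lam*y^2/2) * exp (-lam*(y-c)^2))"
    unfolding f0_def Fg_def by simp
  also have "\<dots> = (LINT c:{-R..R}|lborel. exp (lam*y^2/2) * exp (-lam*(y-c)^2))"
    using set_borel_integral_eq_integral(2)[OF si] by simp
  finally show ?thesis unfolding set_lebesgue_integral_def by (simp add: mult.left_commute)
qed

lemma OU_gen:
  fixes a s lam R x :: real
  assumes s: "s > 0" and lam: "lam = 1/s^2" and R: "R > 0"
  shows "(\<integral>z. f0 lam R (a*x + s*z) \<partial>gauss) = 1/sqrt 2 * exp (-(a^2/(4* s^2))*x^2) * Shn (a/s^2) R 0 x"
proof -
  define E where "E = (\<lambda>z c. exp (lam*(a*x+s*z)^2/2) * exp (-lam*(a*x+s*z-c)^2))"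
  define K where "K = (\<lambda>c. 1/sqrt 2 * exp (-(a^2/(4* s^2))*x^2 + (a/s^2)*c*x))"
  define f where "f = (\<lambda>c z. indicator {-R..R} c * (std_normal_density z * E z c))"
  have [measurable]: "f0 lam R \<in> borel_measurable borel" using f0_meas R by simp
  have gi: "(\<integral>z. std_normal_density z * E z c \<partial>lborel) = K c" for c
    unfolding E_def K_def by (rule gauss_inner(2)[OF s lam])
  have gint: "integrable lborel (\<lambda>z. std_normal_density z * E z c)" for c
    unfolding E_def by (rule gauss_inner(1)[OF s lam])
  have 1: "(\<integral>z. f0 lam R (a*x+s*z) \<partial>gauss) = (\<integral>z. std_normal_density z * f0 lam R (a*x+s*z) \<partial>lborel)"
    unfolding gauss_def by (subst integral_density) (auto simp: normal_density_nonneg)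
  have 2: "\<dots> = (\<integral>z. (\<integral>c. f c z \<partial>lborel) \<partial>lborel)"
  proof (rule Bochner_Integration.integral_cong[OF refl])
    fix z
    show "std_normal_density z * f0 lam R (a*x+s*z) = (\<integral>c. f c z \<partial>lborel)"
      unfolding f_def E_def f0_lint[of lam R] by (simp add: mult.left_commute)
  qed
  have int: "integrable (lborel \<Otimes>\<^sub>M lborel) (case_prod f)"
  proof (rule lborel_pair.Fubini_integrable)
    show "case_prod f \<in> borel_measurable (lborel \<Otimes>\<^sub>M lborel)" unfolding f_def E_def by measurable
    have inner: "(\<integral>z. norm (case_prod f (c, z)) \<partial>lborel) = K c * indicator {-R..R} c" for c
    proof -
      have "(\<integral>z. norm (case_prod f (c, z)) \<partial>lborel) = (\<integral>z. f c z \<partial>lborel)"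
        unfolding f_def E_def by (intro Bochner_Integration.integral_cong) (auto simp: normal_density_nonneg)
      also have "\<dots> = indicator {-R..R} c * K c" unfolding f_def using gi by simp
      finally show ?thesis by simp
    qed
    show "integrable lborel (\<lambda>c. \<integral>z. norm (case_prod f (c, z)) \<partial>lborel)"
      unfolding inner K_def by (intro borel_integrable_atLeastAtMost continuous_intros)
    show "AE c in lborel. integrable lborel (\<lambda>z. case_prod f (c, z))"
      unfolding f_def using gint by auto
  qed
  have 3: "(\<integral>z. (\<integral>c. f c z \<partial>lborel) \<partial>lborel) = (\<integral>c. (\<integral>z. f c z \<partial>lborel) \<partial>lborel)"
    by (rule lborel_pair.Fubini_integral[OF int])
  have 4: "\<dots> = (\<integral>c. indicator {-R..R} c * K c \<partial>lborel)"
    unfolding f_def using gi by simp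
  have si: "set_integrable lborel {-R..R} K" unfolding K_def
    by (intro borel_integrable_atLeastAtMost' continuous_intros)
  have 5: "(\<integral>c. indicator {-R..R} c * K c \<partial>lborel) = integral {-R..R} K"
    using set_borel_integral_eq_integral(2)[OF si] by (simp add: set_lebesgue_integral_def)
  have 6: "integral {-R..R} K = 1/sqrt 2 * exp (-(a^2/(4* s^2))*x^2) * Shn (a/s^2) R 0 x"
    unfolding K_def Shn_def exp_add by simp
  show ?thesis using 1 2 3 4 5 6 by simp
qed

lemma not_concave_from_second:
  fixes \<psi> \<psi>1 :: "real \<Rightarrow> real"
  assumes d: "\<And>x. (\<psi> has_real_derivative \<psi>1 x) (at x)"
    and d1: "(\<psi>1 has_real_derivative l) (at 0)" and l: "l > 0" and z: "\<psi>1 0 = 0"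
  shows "\<not> concave_on UNIV \<psi>"
proof
  assume cc: "concave_on UNIV \<psi>"
  obtain d where d0: "d > 0" and dr: "\<And>h. h > 0 \<Longrightarrow> h < d \<Longrightarrow> \<psi>1 0 < \<psi>1 (0 + h)"
    using DERIV_pos_inc_right[OF d1 l] by blast
  obtain d' where d0': "d' > 0" and dl: "\<And>h. h > 0 \<Longrightarrow> h < d' \<Longrightarrow> \<psi>1 (0 - h) < \<psi>1 0"
    using DERIV_pos_inc_left[OF d1 l] by blast
  define h where "h = min d d' / 2"
  have h0: "h > 0" "h < d" "h < d'" using d0 d0' by (auto simp: h_def)
  obtain \<xi> where \<xi>: "0 < \<xi>" "\<xi> < h" "\<psi> h - \<psi> 0 = (h - 0) * \<psi>1 \<xi>"
    using MVT2[of 0 h \<psi> \<psi>1] h0 d by auto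
  have "\<psi>1 \<xi> > 0" using dr[of \<xi>] \<xi> h0 z by auto
  then have "h * \<psi>1 \<xi> > 0" using h0 by simp
  then have r: "\<psi> h > \<psi> 0" using \<xi> by simp
  obtain \<eta> where \<eta>: "-h < \<eta>" "\<eta> < 0" "\<psi> 0 - \<psi> (-h) = (0 - (-h)) * \<psi>1 \<eta>"
    using MVT2[of "-h" 0 \<psi> \<psi>1] h0 d by auto
  have "\<psi>1 \<eta> < 0" using dl[of "-\<eta>"] \<eta> h0 z by auto
  then have "h * \<psi>1 \<eta> < 0" using h0 by (simp add: mult_pos_neg)
  then have l': "\<psi> (-h) > \<psi> 0" using \<eta> by simp
  have "(\<lambda>x. - \<psi> x) ((1 - 1/2) *\<^sub>R (-h) + (1/2) *\<^sub>R h) \<le> (1 - 1/2) * (\<lambda>x. - \<psi> x) (-h) + (1/2) * (\<lambda>x. - \<psi> x) h"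
    by (rule convex_onD[OF cc[unfolded concave_on_def]]) auto
  then show False using r l' by simp
qed

lemma U_facts:
  fixes C q k R :: real
  assumes C: "C > 0" and R: "R > 0"
  shows "((\<lambda>x. C*exp(q*x^2)*Shn k R 0 x) has_real_derivative
            C*exp(q*x^2)*(2*q*x*Shn k R 0 x + Shn k R 1 x)) (at x)"
    "((\<lambda>x. C*exp(q*x^2)*(2*q*x*Shn k R 0 x + Shn k R 1 x)) has_real_derivative
            C*exp(q*x^2)*((2*q + 4*q^2*x^2)*Shn k R 0 x + 4*q*x*Shn k R 1 x + Shn k R 2 x)) (at x)"
    "continuous_on UNIV (\<lambda>x. C*exp(q*x^2)*((2*q + 4*q^2*x^2)*Shn k R 0 x + 4*q*x*Shn k R 1 x + Shn k R 2 x))"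
    "C*exp(q*x^2)*Shn k R 0 x > 0"
    "C*exp(q*0^2)*(2*q*0*Shn k R 0 0 + Shn k R 1 0) = 0"
    "C*exp(q*0^2)*((2*q + 4*q^2*0^2)*Shn k R 0 0 + 4*q*0*Shn k R 1 0 + Shn k R 2 0)
       = (2*q + k^2*R^2/3) * (C*exp(q*0^2)*Shn k R 0 0)"
proof -
  note sd = Shn_deriv[of k R, simplified]
  have s2: "Shn k R (Suc (Suc 0)) = Shn k R 2" by (simp add: numeral_2_eq_2)
  show "((\<lambda>x. C*exp(q*x^2)*Shn k R 0 x) has_real_derivative
            C*exp(q*x^2)*(2*q*x*Shn k R 0 x + Shn k R 1 x)) (at x)"
    by (rule derivative_eq_intros sd refl | simp)+ (simp add: algebra_simps)
  show "((\<lambda>x. C*exp(q*x^2)*(2*q*x*Shn k R 0 x + Shn k R 1 x)) has_real_derivative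
            C*exp(q*x^2)*((2*q + 4*q^2*x^2)*Shn k R 0 x + 4*q*x*Shn k R 1 x + Shn k R 2 x)) (at x)"
    by (rule derivative_eq_intros sd refl | simp)+ (simp add: algebra_simps power2_eq_square s2)
  show "continuous_on UNIV (\<lambda>x. C*exp(q*x^2)*((2*q + 4*q^2*x^2)*Shn k R 0 x + 4*q*x*Shn k R 1 x + Shn k R 2 x))"
    by (intro continuous_intros Shn_cont)
  show "C*exp(q*x^2)*Shn k R 0 x > 0" using C Shn0_pos[OF R] by simp
  show "C*exp(q*0^2)*(2*q*0*Shn k R 0 0 + Shn k R 1 0) = 0" using Shn_at0[OF R] by simp
  show "C*exp(q*0^2)*((2*q + 4*q^2*0^2)*Shn k R 0 0 + 4*q*0*Shn k R 1 0 + Shn k R 2 0)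
       = (2*q + k^2*R^2/3) * (C*exp(q*0^2)*Shn k R 0 0)"
    using Shn_at0[OF R] R by (simp add: algebra_simps power2_eq_square power3_eq_cube)
qed

lemma f0_bound:
  fixes lam R y :: real
  assumes "lam > 0" "R > 0"
  shows "f0 lam R y \<le> 2*R*exp (lam*R^2)"
proof -
  have "f0 lam R y = integral {-R..R} (\<lambda>c. exp (lam*y^2/2) * exp (-lam*(y-c)^2))"
    unfolding f0_def Fg_def by simp
  also have "\<dots> \<le> integral {-R..R} (\<lambda>c. exp (lam*R^2))"
  proof (rule integral_le)
    show "(\<lambda>c. exp (lam*y^2/2) * exp (-lam*(y-c)^2)) integrable_on {-R..R}" by (intro cont_int continuous_intros)
    show "(\<lambda>c. exp (lam*R^2)) integrable_on {-R..R}" by (intro cont_int continuous_intros)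
    show "exp (lam*y^2/2) * exp (-lam*(y-c)^2) \<le> exp (lam*R^2)" if c: "c \<in> {-R..R}" for c
    proof -
      have "c^2 \<le> R^2" using c assms by (intro power2_le_iff_abs_le[THEN iffD2]) auto
      moreover have "y^2/2 - (y-c)^2 = c^2 - (y-2*c)^2/2" by (simp add: field_simps power2_eq_square)
      moreover have "(y-2*c)^2 \<ge> 0" by simp
      ultimately have "y^2/2 - (y-c)^2 \<le> R^2" by linarith
      then have "lam*(y^2/2 - (y-c)^2) \<le> lam*R^2" using assms by (intro mult_left_mono) auto
      then have "lam*y^2/2 + -lam*(y-c)^2 \<le> lam*R^2" by (simp add: algebra_simps)
      then show ?thesis by (simp add: exp_add[symmetric])
    qed
  qed
  also have "\<dots> = 2*R*exp (lam*R^2)" using assms by (simp add: content_real)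
  finally show ?thesis .
qed

lemma f0_pos: "lam > 0 \<Longrightarrow> R > 0 \<Longrightarrow> f0 lam R y > 0"
  unfolding f0_def using Fg_pos[of R lam y] by simp

theorem mainTheorem6:
  fixes t lam M :: real
  assumes "t > 0" and "lam = 1 / (1 - exp (- 2 * t))" and "M > 0"
  shows "\<exists>f :: real \<Rightarrow> real.
           bounded (range f) \<and> f \<in> borel_measurable borel \<and>
           neg_log_concave lam f \<and> integrable gauss f \<and> (\<integral>x. f x \<partial>gauss) = 1 \<and>
           \<not> neg_log_concave M (OU t f) \<and>
           C2 (OU t f) \<and> deriv (deriv (\<lambda>x. ln (OU t f x))) 0 \<ge> M"
proof -
  define a where "a = exp (- t)"
  define s where "s = sqrt (1 - exp (- 2 * t))"
  have e2: "exp (- 2 * t) < 1" using assms(1) by simp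
  have s0: "s > 0" unfolding s_def using e2 by simp
  have s2: "s^2 = 1 - exp (- 2 * t)" unfolding s_def using e2 by simp
  have lam': "lam = 1/s^2" using assms(2) s2 by simp
  have lampos: "lam > 0" using lam' s0 by simp
  define q where "q = -(a^2/(4* s^2))"
  define k where "k = a/s^2"
  have k0: "k > 0" unfolding k_def a_def using s0 by simp
  have q0: "q \<le> 0" unfolding q_def using s0 by simp
  define R where "R = sqrt (3*(M+1-2*q)/k^2)"
  have Mq: "M+1-2*q > 0" using q0 assms(3) by simp
  have R0: "R > 0" unfolding R_def using Mq k0 by simp
  have R2: "R^2 = 3*(M+1-2*q)/k^2" unfolding R_def
    by (rule real_sqrt_pow2) (use Mq k0 in simp)
  have kR: "k^2*R^2/3 = M + 1 - 2*q" unfolding R2 using k0 by simp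
  interpret P: prob_space gauss unfolding gauss_def by (rule prob_space_normal_density) simp
  define B where "B = 2*R*exp (lam*R^2)"
  have f0pos: "\<And>y. f0 lam R y > 0" using f0_pos lampos R0 by auto
  have f0bd: "\<And>y. f0 lam R y \<le> B" unfolding B_def using f0_bound lampos R0 by auto
  have f0m: "f0 lam R \<in> borel_measurable borel" using f0_meas R0 by simp
  have f0mg: "f0 lam R \<in> borel_measurable gauss" using f0m unfolding gauss_def by simp
  have int0: "integrable gauss (f0 lam R)"
    by (rule P.integrable_const_bound[where B=B]) (use f0pos f0bd f0mg in \<open>auto simp: less_imp_le\<close>)
  define Z0 where "Z0 = (\<integral>y. f0 lam R y \<partial>gauss)"
  have Z0pos: "Z0 > 0"
  proof -
    have "Z0 \<ge> 0" unfolding Z0_def using f0pos by (intro integral_nonneg_AE) (auto simp: less_imp_le)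
    moreover have "Z0 \<noteq> 0"
    proof
      assume "Z0 = 0"
      then have "AE y in gauss. f0 lam R y = 0"
        using integral_nonneg_eq_0_iff_AE[OF int0] f0pos unfolding Z0_def by (auto simp: less_imp_le)
      then have "AE y in gauss. False" using f0pos by (auto elim!: AE_mp intro!: AE_I2 simp: less_le)
      then show False by simp
    qed
    ultimately show ?thesis by simp
  qed
  define f where "f = (\<lambda>y. f0 lam R y / Z0)"
  define C where "C = 1/sqrt 2/Z0"
  have C0: "C > 0" unfolding C_def using Z0pos by simp
  have OUf: "OU t f = (\<lambda>x. C*exp(q*x^2)*Shn k R 0 x)"
  proof
    fix x
    have "OU t f x = (\<integral>z. f0 lam R (a*x + s*z) \<partial>gauss) / Z0"
      unfolding OU_def f_def a_def s_def by simp
    also have "\<dots> = C*exp(q*x^2)*Shn k R 0 x"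
      unfolding OU_gen[OF s0 lam' R0] C_def q_def k_def by simp
    finally show "OU t f x = C*exp(q*x^2)*Shn k R 0 x" .
  qed
  define U where "U = (\<lambda>x. C*exp(q*x^2)*Shn k R 0 x)"
  define U1 where "U1 = (\<lambda>x. C*exp(q*x^2)*(2*q*x*Shn k R 0 x + Shn k R 1 x))"
  define U2 where "U2 = (\<lambda>x. C*exp(q*x^2)*((2*q + 4*q^2*x^2)*Shn k R 0 x + 4*q*x*Shn k R 1 x + Shn k R 2 x))"
  note UF = U_facts[OF C0 R0, where q=q and k=k]
  have dU: "\<And>x. (U has_real_derivative U1 x) (at x)" using UF(1) unfolding U_def U1_def by simp
  have dU1: "\<And>x. (U1 has_real_derivative U2 x) (at x)" using UF(2) unfolding U1_def U2_def by simp
  have cU2: "continuous_on UNIV U2" using UF(3) unfolding U2_def by simp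
  have Upos: "\<And>x. U x > 0" using UF(4) unfolding U_def by simp
  have U10: "U1 0 = 0" using UF(5) unfolding U1_def by simp
  have U20: "U2 0 = (M+1) * U 0" using UF(6) kR unfolding U2_def U_def by simp
  have OUU: "OU t f = U" using OUf U_def by simp
  have derU: "deriv U = U1" by (rule ext, rule DERIV_imp_deriv, rule dU)
  have derU1: "deriv U1 = U2" by (rule ext, rule DERIV_imp_deriv, rule dU1)
  have C2U: "C2 (OU t f)"
    unfolding C2_def OUU derU derU1
    using dU dU1 cU2 by (auto simp: real_differentiable_def)
  have dL: "((\<lambda>x. ln (U x)) has_real_derivative U1 x / U x) (at x)" for x
    using dU[of x] Upos[of x] by (auto intro!: derivative_eq_intros)
  have derL: "deriv (\<lambda>x. ln (U x)) = (\<lambda>x. U1 x / U x)" by (rule ext, rule DERIV_imp_deriv, rule dL)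
  have dQ: "((\<lambda>x. U1 x / U x) has_real_derivative (U2 0 * U 0 - U1 0 * U1 0) / (U 0 * U 0)) (at 0)"
    using dU[of 0] dU1[of 0] Upos[of 0] by (auto intro!: derivative_eq_intros)
  have Qval: "(U2 0 * U 0 - U1 0 * U1 0) / (U 0 * U 0) = M + 1"
    using U10 U20 Upos[of 0] by simp
  have dd: "deriv (deriv (\<lambda>x. ln (OU t f x))) 0 = M + 1"
    unfolding OUU derL using DERIV_imp_deriv[OF dQ] Qval by simp
  have notc: "\<not> neg_log_concave M (OU t f)"
  proof
    assume "neg_log_concave M (OU t f)"
    then have cc: "concave_on UNIV (\<lambda>x. ln (U x) - M * x\<^sup>2 / 2)" unfolding neg_log_concave_def OUU by simp
    have d1: "((\<lambda>x. ln (U x) - M * x\<^sup>2 / 2) has_real_derivative U1 x / U x - M * x) (at x)" for x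
      using dU[of x] Upos[of x] by (auto intro!: derivative_eq_intros)
    have d2: "((\<lambda>x. U1 x / U x - M * x) has_real_derivative (M + 1) - M) (at 0)"
      by (rule DERIV_diff[OF dQ[unfolded Qval]]) (auto intro!: derivative_eq_intros)
    show False
      using not_concave_from_second[OF d1 d2] cc U10 by simp
  qed
  have fpos: "\<And>y. f y > 0" unfolding f_def using f0pos Z0pos by simp
  have nlc: "neg_log_concave lam f"
  proof -
    have eq: "(\<lambda>x. ln (f x) - lam * x\<^sup>2 / 2) = (\<lambda>x. ln (Fg lam R x) + (- ln Z0))"
    proof
      fix x
      have Fp: "Fg lam R x > 0" using Fg_pos[OF R0 less_imp_le[OF lampos]] by simp
      show "ln (f x) - lam * x\<^sup>2 / 2 = ln (Fg lam R x) + (- ln Z0)"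
        unfolding f_def f0_def using Fp Z0pos by (simp add: ln_div ln_mult)
    qed
    show ?thesis unfolding neg_log_concave_def eq
      using fpos concave_on_add[OF lnFg_concave[OF R0 lampos] concave_on_const[THEN iffD2], of "- ln Z0"] by simp
  qed
  have bd: "bounded (range f)"
    unfolding bounded_iff using f0bd f0pos Z0pos
    by (intro exI[of _ "B/Z0"]) (auto simp: f_def divide_right_mono less_imp_le)
  have fm: "f \<in> borel_measurable borel" unfolding f_def using f0m by measurable
  have fint: "integrable gauss f" unfolding f_def using int0 by simp
  have fone: "(\<integral>x. f x \<partial>gauss) = 1" unfolding f_def using Z0pos by (simp add: Z0_def[symmetric])
  show ?thesis
    by (intro exI[of _ f]) (use bd fm nlc fint fone notc C2U dd in auto)
qed

end
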